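(* Let $q=2^m$, let $d>3$ be an odd integer and $f(x)=x^d$. Let $S_1,S_2\subset\mathbb{P}^3(\overline{\mathbb{F}}_q)$ (coordinates $(x:y:z:t)$) be defined by $P_f(x,y,z)=0$ and $P_f(x,y,t)=0$, let $X=S_1\cap S_2$, and let $H_7$ be the plane $x+y+z+t=0$. Then $X\cap H_7$ equals the curve $C_7:=S_2\cap H_7$.
   Context: For $f(x)=x^d$, $P_f(x,y,z)=\frac{x^d+y^d+z^d+(x+y+z)^d}{(x+y)(x+z)(y+z)}$, a homogeneous polynomial (exact division in characteristic 2). *)

theory Defs
  imports "HOL-Computational_Algebra.Polynomial" "HOL-Library.Z2" "HOL-Algebra.Algebraic_Closure_Type"
begin

text \<open>The base field: an algebraic closure of F_2 (which is also an algebraic closure of F_q, q = 2^m).\<close>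
type_synonym K = "bit alg_closure"

text \<open>Trivariate polynomials in x,y,z over K as nested univariate polynomials:
  innermost variable x, then y, outermost z.\<close>
type_synonym tpoly = "K poly poly poly"

definition eval3 :: "tpoly \<Rightarrow> K \<Rightarrow> K \<Rightarrow> K \<Rightarrow> K" where
  "eval3 P x y z = poly (map_poly (\<lambda>c. poly (map_poly (\<lambda>r. poly r x) c) y) P) z"

definition varX :: tpoly where "varX = [:[:[:0, 1:]:]:]"
definition varY :: tpoly where "varY = [:[:0, 1:]:]"
definition varZ :: tpoly where "varZ = [:0, 1:]"

definition Pf :: "nat \<Rightarrow> tpoly" where
  "Pf d = (varX ^ d + varY ^ d + varZ ^ d + (varX + varY + varZ) ^ d)
          div ((varX + varY) * (varX + varZ) * (varY + varZ))"

type_synonym vec4 = "K \<times> K \<times> K \<times> K"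

definition scale4 :: "K \<Rightarrow> vec4 \<Rightarrow> vec4" where
  "scale4 c v = (case v of (x, y, z, t) \<Rightarrow> (c * x, c * y, c * z, c * t))"

definition proj_rel :: "vec4 rel" where
  "proj_rel = {(v, w). v \<noteq> (0,0,0,0) \<and> w \<noteq> (0,0,0,0) \<and> (\<exists>c. c \<noteq> 0 \<and> w = scale4 c v)}"

definition P3 :: "vec4 set set" where
  "P3 = (UNIV - {(0,0,0,0)}) // proj_rel"

definition proj_zero :: "(vec4 \<Rightarrow> bool) \<Rightarrow> vec4 set set" where
  "proj_zero F = {p \<in> P3. \<forall>v \<in> p. F v}"

definition S1 :: "nat \<Rightarrow> vec4 set set" where
  "S1 d = proj_zero (\<lambda>(x, y, z, t). eval3 (Pf d) x y z = 0)"

definition S2 :: "nat \<Rightarrow> vec4 set set" where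
  "S2 d = proj_zero (\<lambda>(x, y, z, t). eval3 (Pf d) x y t = 0)"

definition H7 :: "vec4 set set" where
  "H7 = proj_zero (\<lambda>(x, y, z, t). x + y + z + t = 0)"

definition Xcurve :: "nat \<Rightarrow> vec4 set set" where
  "Xcurve d = S1 d \<inter> S2 d"

definition C7 :: "nat \<Rightarrow> vec4 set set" where
  "C7 d = S2 d \<inter> H7"

end

theory Submission
  imports Defs
begin
lemma two_K: "(1::K) + 1 = 0"
proof -
  have "to_ac (1::bit) + to_ac 1 = 0" by (simp only: to_ac_add[symmetric]) simp
  thus ?thesis by (simp only: to_ac_1)
qed

lemma mp_add:
  assumes "\<And>a b. f (a + b) = f a + f b" "f 0 = 0"
  shows "map_poly f (p + q) = map_poly f p + map_poly f q"
  by (rule poly_eqI) (simp add: coeff_map_poly assms)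

lemma mp_smult:
  assumes "\<And>a b. f (a * b) = f a * f b" "f 0 = 0"
  shows "map_poly f (smult c p) = smult (f c) (map_poly f p)"
  by (rule poly_eqI) (simp add: coeff_map_poly assms)

lemma mp_mult:
  fixes f :: "'a::comm_ring_1 \<Rightarrow> 'b::comm_ring_1"
  assumes "\<And>a b. f (a + b) = f a + f b" "\<And>a b. f (a * b) = f a * f b" "f 0 = 0"
  shows "map_poly f (p * q) = map_poly f p * map_poly f q"
proof (induction p)
  case 0 thus ?case by simp
next
  case (pCons a p)
  have "map_poly f (pCons a p * q) = map_poly f (smult a q + pCons 0 (p * q))" by simp
  also have "\<dots> = smult (f a) (map_poly f q) + pCons 0 (map_poly f p * map_poly f q)"
    by (simp add: mp_add mp_smult assms map_poly_pCons pCons.IH)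
  also have "\<dots> = pCons (f a) (map_poly f p) * map_poly f q" by simp
  finally show ?case by (simp add: map_poly_pCons assms(3))
qed

definition hh :: "K \<Rightarrow> K \<Rightarrow> K poly poly \<Rightarrow> K" where
  "hh x y c = poly (map_poly (\<lambda>r. poly r x) c) y"

lemma hh_add: "hh x y (a + b) = hh x y a + hh x y b"
  unfolding hh_def by (subst mp_add) (simp_all)
lemma hh_mult: "hh x y (a * b) = hh x y a * hh x y b"
  unfolding hh_def by (subst mp_mult) (simp_all)
lemma hh_0: "hh x y 0 = 0" by (simp add: hh_def)

lemma eval3_hh: "eval3 P x y z = poly (map_poly (hh x y) P) z"
  by (simp add: eval3_def hh_def[abs_def])

lemma eval3_pcompose: "eval3 (pcompose P q) x y z = eval3 P x y (eval3 q x y z)"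
proof (induction P)
  case 0 thus ?case by (simp add: eval3_def)
next
  case (pCons a p)
  have "eval3 (pcompose (pCons a p) q) x y z = eval3 ([:a:] + q * pcompose p q) x y z"
    by (simp add: pcompose_pCons)
  also have "\<dots> = hh x y a + eval3 q x y z * eval3 (pcompose p q) x y z"
    unfolding eval3_hh by (simp add: mp_add mp_mult hh_add hh_mult hh_0 map_poly_pCons)
  also have "\<dots> = eval3 (pCons a p) x y (eval3 q x y z)"
    using pCons.IH unfolding eval3_hh by (simp add: map_poly_pCons hh_0)
  finally show ?case .
qed

lemma two_poly: assumes "(1::'a::comm_ring_1) + 1 = 0" shows "(1::'a poly) + 1 = 0"
  by (simp only: one_pCons add_pCons assms pCons_0_0 add_0)
lemma two_R: "(1::K poly poly) + 1 = 0" by (intro two_poly two_K)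
lemma two_T: "(1::tpoly) + 1 = 0" by (intro two_poly two_R)

lemma char2: assumes "(1::'a::comm_ring_1) + 1 = 0" shows "(a::'a) + a = 0"
proof -
  have "a + a = (1 + 1) * a" by (simp only: distrib_right mult_1)
  thus ?thesis by (simp only: assms mult_zero_left)
qed
lemma char2_minus: assumes "(1::'a::comm_ring_1) + 1 = 0" shows "- (a::'a) = a"
proof -
  have "a + a = 0" by (rule char2[OF assms])
  hence "a = - a" by (simp only: add_eq_0_iff)
  thus ?thesis by simp
qed
lemma char2_diff: "(1::'a::comm_ring_1) + 1 = 0 \<Longrightarrow> (a::'a) - b = a + b"
  by (simp add: char2_minus)

lemma aaT: "(a::tpoly) + a = 0" using char2[OF two_T] .
lemma aaR: "(a::K poly poly) + a = 0" using char2[OF two_R] .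
lemma mR: "- (a::K poly poly) = a" using char2_minus[OF two_R] .
lemma dT: "(a::tpoly) - b = a + b" using char2_diff[OF two_T] .
lemma dK: "(a::K) - b = a + b" using char2_diff[OF two_K] .

definition XR :: "K poly poly" where "XR = [:[:0,1:]:]"
definition YR :: "K poly poly" where "YR = [:0,1:]"

lemma varX_c: "varX = [:XR:]" by (simp add: varX_def XR_def)
lemma varY_c: "varY = [:YR:]" by (simp add: varY_def YR_def)

lemma pow_dvd: "(a::tpoly) ^ n + b ^ n = (a + b) * (\<Sum>i<n. b^(n - Suc i) * a^i)"
  using power_diff_sumr2[of a n b] by (simp add: dT)

definition N :: "nat \<Rightarrow> tpoly" where
  "N d = varX ^ d + varY ^ d + varZ ^ d + (varX + varY + varZ) ^ d"
definition D :: tpoly where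
  "D = (varX + varY) * (varX + varZ) * (varY + varZ)"

lemma XY_ne: "XR + YR \<noteq> 0"
proof
  assume "XR + YR = 0"
  hence "coeff (XR + YR) 1 = 0" by simp
  thus False by (simp add: XR_def YR_def)
qed

lemma polyN: "poly (N d) c = XR ^ d + YR ^ d + c ^ d + (XR + YR + c) ^ d"
  by (simp add: N_def varX_c varY_c varZ_def)

lemma t0: "N d = (varX ^ d + varY ^ d) + (varZ ^ d + (varX + varY + varZ) ^ d)"
    by (simp only: N_def add_ac)
lemma cancelT: "(a::tpoly) + (b + a) = b"
proof - have "a + (b + a) = (a + a) + b" by (simp only: add_ac) thus ?thesis by (simp add: aaT) qed
lemma cancelT3: "(a::tpoly) + (a + b) = b"
proof - have "a + (a + b) = (a + a) + b" by (simp only: add_ac) thus ?thesis by (simp add: aaT) qed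
lemma cancelR2: "(a::K poly poly) + b + a = b"
proof - have "a + b + a = (a + a) + b" by (simp only: add_ac) thus ?thesis by (simp add: aaR) qed
lemma cancelR3: "(a::K poly poly) + b + b = a"
proof - have "a + b + b = (b + b) + a" by (simp only: add_ac) thus ?thesis by (simp add: aaR) qed
lemma t1: "varZ + (varX + varY + varZ) = varX + varY" by (rule cancelT)

lemma step1: "\<exists>M. N d = (varX + varY) * M"
proof -
  have B: "varZ ^ d + (varX + varY + varZ) ^ d = (varX + varY) * (\<Sum>i<d. (varX + varY + varZ)^(d - Suc i) * varZ^i)"
    by (simp only: pow_dvd t1)
  have A: "varX ^ d + varY ^ d = (varX + varY) * (\<Sum>i<d. varY^(d - Suc i) * varX^i)"
    by (rule pow_dvd)
  show ?thesis by (rule exI) (simp only: t0 A B distrib_left[symmetric])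
qed

lemma N_dvd: "\<exists>Q. N d = D * Q"
proof -
  obtain M where M: "N d = (varX + varY) * M" using step1 by blast
  have "poly (N d) XR = 0"
    by (simp only: polyN cancelR2 aaR)
  hence "(XR + YR) * poly M XR = 0" unfolding M by (simp add: varX_c varY_c)
  hence "poly M (- XR) = 0" using XY_ne by (simp add: mR)
  then obtain M' where M': "M = [:XR, 1:] * M'" using dvd_iff_poly_eq_0 by blast
  have "poly (N d) YR = 0"
    by (simp only: polyN cancelR2 cancelR3 aaR)
  moreover have "poly (N d) YR = (XR + YR) * ((XR + YR) * poly M' YR)" unfolding M M' by (simp add: varX_c varY_c algebra_simps)
  ultimately have "(XR + YR) * ((XR + YR) * poly M' YR) = 0" by simp
  hence "poly M' YR = 0" using XY_ne by (simp only: mult_eq_0_iff simp_thms)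
  hence "poly M' (- YR) = 0" by (simp only: mR)
  then obtain Q where Q: "M' = [:YR, 1:] * Q" using dvd_iff_poly_eq_0 by blast
  have e: "varX + varZ = [:XR, 1:]" "varY + varZ = [:YR, 1:]"
    by (simp_all add: varX_c varY_c varZ_def)
  have "N d = D * Q" unfolding D_def M M' Q e by (simp only: mult_ac)
  thus ?thesis by blast
qed

lemma D_ne: "D \<noteq> 0"
proof -
  have e: "varX + varZ = [:XR, 1:]" "varY + varZ = [:YR, 1:]" "varX + varY = [:XR + YR:]"
    by (simp_all add: varX_c varY_c varZ_def)
  show ?thesis unfolding D_def e using XY_ne by simp
qed

definition sq :: tpoly where "sq = varX + varY + varZ"

lemma pcompose_pow: "pcompose (p ^ n) r = (pcompose p r) ^ n"
  by (induction n) (simp_all add: pcompose_1 pcompose_mult)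

lemma sX: "pcompose varX sq = varX" by (simp add: varX_c)
lemma sY: "pcompose varY sq = varY" by (simp add: varY_c)
lemma sZ: "pcompose varZ sq = sq" by (simp add: varZ_def pcompose_pCons)

lemma sN: "pcompose (N d) sq = N d"
proof -
  have "varX + varY + sq = varZ" unfolding sq_def by (rule cancelT3)
  hence "pcompose (N d) sq = varX ^ d + varY ^ d + sq ^ d + varZ ^ d"
    by (simp add: N_def pcompose_add pcompose_pow sX sY sZ)
  thus ?thesis by (simp add: N_def sq_def add_ac)
qed

lemma sD: "pcompose D sq = D"
proof -
  have "varX + sq = (varX + varX) + (varY + varZ)" unfolding sq_def by (simp only: add_ac)
  hence 1: "varX + sq = varY + varZ" by (simp add: aaT)
  have "varY + sq = (varY + varY) + (varX + varZ)" unfolding sq_def by (simp only: add_ac)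
  hence 2: "varY + sq = varX + varZ" by (simp add: aaT)
  show ?thesis by (simp add: D_def pcompose_add pcompose_mult sX sY sZ 1 2 mult_ac)
qed

lemma sPf: "pcompose (Pf d) sq = Pf d"
proof -
  obtain Q where Q: "N d = D * Q" using N_dvd by blast
  have P: "Pf d = Q" unfolding Pf_def N_def[symmetric] D_def[symmetric] Q using D_ne by simp
  have "D * pcompose Q sq = D * Q" using sN[of d] unfolding Q pcompose_mult sD .
  hence "pcompose Q sq = Q" using D_ne by simp
  thus ?thesis using P by simp
qed

lemma hhX: "hh x y XR = x" by (simp add: hh_def XR_def map_poly_pCons)
lemma hhY: "hh x y YR = y" by (simp add: hh_def YR_def map_poly_pCons)
lemma hh1: "hh x y 1 = 1" by (simp add: hh_def)
lemma eval_sq: "eval3 sq x y z = x + y + z"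
proof -
  have sqe: "sq = pCons (XR + YR) (pCons 1 0)" by (simp add: sq_def varX_c varY_c varZ_def)
  have "map_poly (hh x y) sq = pCons (x + y) (pCons 1 0)"
    unfolding sqe by (simp add: map_poly_pCons hh_0 hh_add hhX hhY hh1)
  thus ?thesis unfolding eval3_hh by simp
qed

lemma key: "eval3 (Pf d) x y (x + y + z) = eval3 (Pf d) x y z"
  proof -
  have "eval3 (Pf d) x y (x + y + z) = eval3 (Pf d) x y (eval3 sq x y z)" by (simp only: eval_sq)
  also have "\<dots> = eval3 (pcompose (Pf d) sq) x y z" by (simp only: eval3_pcompose)
  finally show ?thesis by (simp only: sPf)
qed

theorem proposition3p2:
  fixes d :: nat
  assumes "odd d" and "d > 3"
  shows "Xcurve d \<inter> H7 = C7 d"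
proof
  show "Xcurve d \<inter> H7 \<subseteq> C7 d" unfolding Xcurve_def C7_def by blast
next
  show "C7 d \<subseteq> Xcurve d \<inter> H7"
  proof
    fix p assume p: "p \<in> C7 d"
    have "p \<in> S1 d"
      unfolding S1_def proj_zero_def
    proof (intro CollectI conjI ballI)
      show "p \<in> P3" using p by (simp add: C7_def S2_def proj_zero_def)
      fix v assume v: "v \<in> p"
      obtain x y z t where vv: "v = (x, y, z, t)" by (cases v) auto
      have h1: "x + y + z + t = 0" using p v vv by (auto simp: C7_def H7_def proj_zero_def)
      have h2: "eval3 (Pf d) x y t = 0" using p v vv by (auto simp: C7_def S2_def proj_zero_def)
      have "t = x + y + z" using h1 by (simp only: add_eq_0_iff char2_minus[OF two_K])
      hence "eval3 (Pf d) x y z = 0" using h2 key by simp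
      thus "case v of (x, y, z, t) \<Rightarrow> eval3 (Pf d) x y z = 0" using vv by simp
    qed
    thus "p \<in> Xcurve d \<inter> H7" using p by (simp add: Xcurve_def C7_def)
  qed
qed
end
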